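(* Let $p,q\geq1$ be integers and let $(\vartheta(s),\alpha(s))$ be a trajectory of the differential system $$\dot\vartheta=3\sin\vartheta\cos\vartheta\sin(\alpha-\vartheta),\qquad \dot\alpha=q\cos\alpha\cos\vartheta-p\sin\alpha\sin\vartheta.$$ Suppose that for some $s_0$ one has $0<\vartheta(s_0)<\pi/2$ and $\vartheta(s_0)+\pi/2\leq\alpha(s_0)\leq\vartheta(s_0)+3\pi/2$, i.e. the trajectory is in $R_2=\{(\vartheta,\alpha):0\leq\vartheta\leq\pi/2,\ \vartheta+\pi/2\leq\alpha\leq\vartheta+3\pi/2\}$. Then the trajectory is in $R_2$ for all $s\leq s_0$. *)

theory Defs
  imports Complex_Main
begin

definition R2 :: "(real \<times> real) set" where
  "R2 = {(t, a). 0 \<le> t \<and> t \<le> pi/2 \<and> t + pi/2 \<le> a \<and> a \<le> t + 3*pi/2}"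

end

theory Submission
  imports Defs "HOL-Analysis.Analysis"
begin

lemma deriv_P:
  fixes th :: "real \<Rightarrow> real"
  assumes "\<And>s. (th has_real_derivative D s) (at s)"
  shows "((\<lambda>s. (sin (th s) * cos (th s))^2 * exp(-6* s)) has_real_derivative
     (2 * (sin (th x) * cos (th x)) * (cos (th x)^2 - sin (th x)^2) * D x * exp(-6* x) - 6 * (sin (th x) * cos (th x))^2 * exp(-6* x))) (at x)"
  apply (rule derivative_eq_intros assms refl)+
  apply (simp add: algebra_simps power2_eq_square)
  done

lemma deriv_V:
  fixes th al :: "real \<Rightarrow> real"
  assumes "\<And>s. (th has_real_derivative D s) (at s)"
  assumes "\<And>s. (al has_real_derivative E s) (at s)"
  shows "((\<lambda>s. cos (al s - th s) * exp(K* s)) has_real_derivative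
     (- sin (al x - th x) * (E x - D x) * exp (K* x) + K * cos (al x - th x) * exp(K* x))) (at x)"
  apply (rule derivative_eq_intros assms refl)+
  apply (simp add: algebra_simps power2_eq_square)
  done

lemma alg_id:
  fixes a t p q :: real
  shows "q* cos a* cos t - p* sin a* sin t - 3* sin t* cos t* sin(a-t)
       = cos(a-t)* (q* cos t^2 - p* sin t^2) - (p+q+3)* sin t* cos t* sin(a-t)"
proof -
  have h: "sin t^2 + cos t^2 = 1" by simp
  show ?thesis
    unfolding sin_diff cos_diff using h
    by algebra
qed

lemma prod_le1: "\<bar>a::real\<bar> \<le> 1 \<Longrightarrow> \<bar>b\<bar> \<le> 1 \<Longrightarrow> a* b \<le> 1"
proof -
  assume "\<bar>a\<bar> \<le> 1" "\<bar>b\<bar> \<le> 1"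
  then have "\<bar>a* b\<bar> \<le> 1" by (simp add: abs_mult mult_le_one)
  then show ?thesis by linarith
qed

theorem lemma4p8:
  fixes p q :: nat and \<theta> \<alpha> :: "real \<Rightarrow> real" and s0 :: real
  assumes "p \<ge> 1" and "q \<ge> 1"
    and "\<And>s. (\<theta> has_real_derivative
              (3 * sin (\<theta> s) * cos (\<theta> s) * sin (\<alpha> s - \<theta> s))) (at s)"
    and "\<And>s. (\<alpha> has_real_derivative
              (real q * cos (\<alpha> s) * cos (\<theta> s) - real p * sin (\<alpha> s) * sin (\<theta> s))) (at s)"
    and "0 < \<theta> s0" and "\<theta> s0 < pi/2"
    and "\<theta> s0 + pi/2 \<le> \<alpha> s0" and "\<alpha> s0 \<le> \<theta> s0 + 3* pi/2"
  shows "\<forall>s\<le>s0. (\<theta> s, \<alpha> s) \<in> R2"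
proof -
  define D where "D s = 3 * sin (\<theta> s) * cos (\<theta> s) * sin (\<alpha> s - \<theta> s)" for s
  define E where "E s = real q * cos (\<alpha> s) * cos (\<theta> s) - real p * sin (\<alpha> s) * sin (\<theta> s)" for s
  have dth: "\<And>s. (\<theta> has_real_derivative D s) (at s)" using assms(3) by (simp add: D_def)
  have dal: "\<And>s. (\<alpha> has_real_derivative E s) (at s)" using assms(4) by (simp add: E_def)
  have cth: "\<And>x. isCont \<theta> x" using dth DERIV_isCont by blast
  have cal: "\<And>x. isCont \<alpha> x" using dal DERIV_isCont by blast
  define P where "P s = (sin (\<theta> s) * cos (\<theta> s))^2 * exp(-6* s)" for s
  have Pnz: "P s > 0" if "s \<le> s0" for s
  proof -
    have "P s0 \<le> P s"
    proof (rule DERIV_nonpos_imp_nonincreasing[OF that, of P])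
      fix x
      let ?Y = "(sin (\<theta> x) * cos (\<theta> x))^2"
      have dd: "(P has_real_derivative
        (2 * (sin (\<theta> x) * cos (\<theta> x)) * (cos (\<theta> x)^2 - sin (\<theta> x)^2) * D x * exp(-6* x) - 6 * ?Y * exp(-6* x))) (at x)"
        unfolding P_def[abs_def] by (rule deriv_P[OF dth])
      have eq: "2 * (sin (\<theta> x) * cos (\<theta> x)) * (cos (\<theta> x)^2 - sin (\<theta> x)^2) * D x * exp(-6* x) - 6 * ?Y * exp(-6* x)
          = 6 * ?Y * exp(-6* x) * ((cos (\<theta> x)^2 - sin (\<theta> x)^2) * sin (\<alpha> x - \<theta> x) - 1)"
        by (simp add: D_def algebra_simps power2_eq_square)
      have "\<bar>cos (\<theta> x)^2 - sin (\<theta> x)^2\<bar> \<le> 1"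
        by (metis abs_cos_le_one cos_double)
      then have "(cos (\<theta> x)^2 - sin (\<theta> x)^2) * sin (\<alpha> x - \<theta> x) \<le> 1"
        by (intro prod_le1) (auto simp: abs_sin_le_one)
      then have "6 * ?Y * exp(-6* x) * ((cos (\<theta> x)^2 - sin (\<theta> x)^2) * sin (\<alpha> x - \<theta> x) - 1) \<le> 0"
        by (intro mult_nonneg_nonpos) auto
      with dd eq show "\<exists>y. (P has_real_derivative y) (at x) \<and> y \<le> 0" by metis
    qed
    moreover have "P s0 > 0"
    proof -
      have "sin (\<theta> s0) > 0" using assms(5,6) by (intro sin_gt_zero) auto
      moreover have "cos (\<theta> s0) > 0" using assms(5,6) by (intro cos_gt_zero) auto
      ultimately show ?thesis by (simp add: P_def)
    qed
    ultimately show ?thesis by linarith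
  qed
  have thr: "0 < \<theta> s \<and> \<theta> s < pi/2" if ss: "s \<le> s0" for s
  proof (rule ccontr)
    assume "\<not> ?thesis"
    then have "\<theta> s \<le> 0 \<or> \<theta> s \<ge> pi/2" by linarith
    then obtain t where t: "s \<le> t" "t \<le> s0" "\<theta> t = 0 \<or> \<theta> t = pi/2"
    proof
      assume "\<theta> s \<le> 0"
      then obtain t where "s \<le> t" "t \<le> s0" "\<theta> t = 0"
        using IVT[of \<theta> s 0 s0] ss assms(5) cth by auto
      then show ?thesis using that by blast
    next
      assume "\<theta> s \<ge> pi/2"
      then obtain t where "s \<le> t" "t \<le> s0" "\<theta> t = pi/2"
        using IVT2[of \<theta> s0 "pi/2" s] ss assms(6) cth by auto
      then show ?thesis using that by blast
    qed
    then have "cos (\<theta> t) = 0 \<or> sin (\<theta> t) = 0" by (metis cos_pi_half sin_zero)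
    then have "P t = 0" by (auto simp: P_def)
    with Pnz[OF t(2)] show False by simp
  qed
  define K :: real where "K = real p + real q"
  define V where "V s = cos (\<alpha> s - \<theta> s) * exp(K* s)" for s
  have cV: "\<And>x. isCont V x"
    unfolding V_def[abs_def] by (intro continuous_intros cth cal)
  have vneg: "cos (\<alpha> s - \<theta> s) \<le> 0" if "s \<le> s0" for s
  proof (rule ccontr)
    assume "\<not> ?thesis"
    then have v1: "V s > 0" by (simp add: V_def)
    define S where "S = {t. s \<le> t \<and> t \<le> s0 \<and> V t \<le> 0}"
    have s0S: "s0 \<in> S"
    proof -
      have "cos (\<alpha> s0 - \<theta> s0 - pi) \<ge> 0"
        using assms(7,8) by (intro cos_ge_zero) auto
      then have "cos (\<alpha> s0 - \<theta> s0) \<le> 0" by (simp add: cos_diff)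
      then show ?thesis using that by (simp add: S_def V_def mult_nonpos_nonneg)
    qed
    have clS: "closed S"
    proof -
      have "S = {t. s \<le> t} \<inter> {t. t \<le> s0} \<inter> {t. V t \<le> 0}" by (auto simp: S_def)
      moreover have "closed {t. V t \<le> 0}"
        using closed_Collect_le[of V "\<lambda>_. 0"] cV
        by (simp add: continuous_at_imp_continuous_on)
      ultimately show ?thesis
        by (auto intro!: closed_Int closed_Collect_le continuous_intros)
    qed
    have bS: "bdd_below S" by (auto simp: S_def bdd_below_def)
    define t2 where "t2 = Inf S"
    have t2S: "t2 \<in> S" unfolding t2_def using closed_contains_Inf[OF _ bS clS] s0S by auto
    have low: "\<And>t. t \<in> S \<Longrightarrow> t2 \<le> t" unfolding t2_def using bS by (simp add: cInf_lower)
    have st2: "s \<le> t2" using t2S by (simp add: S_def)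
    have "V s \<le> V t2"
    proof (rule DERIV_nonneg_imp_increasing_open[OF st2])
      fix x assume x: "s < x" "x < t2"
      have xs0: "x \<le> s0" using x t2S by (simp add: S_def)
      have "x \<notin> S" using low x by force
      then have Vx: "V x > 0" using x xs0 by (simp add: S_def)
      then have cpos: "cos (\<alpha> x - \<theta> x) > 0" by (simp add: V_def zero_less_mult_iff)
      have th: "0 < \<theta> x" "\<theta> x < pi/2" using thr[OF xs0] by auto
      have sc: "sin (\<theta> x) * cos (\<theta> x) \<ge> 0"
        using th by (intro mult_nonneg_nonneg less_imp_le sin_gt_zero cos_gt_zero) auto
      have dd: "(V has_real_derivative
         (- sin (\<alpha> x - \<theta> x) * (E x - D x) * exp (K* x) + K * cos (\<alpha> x - \<theta> x) * exp(K* x))) (at x)"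
        unfolding V_def[abs_def] by (rule deriv_V[OF dth dal])
      define M where "M = real q * cos (\<theta> x)^2 - real p * sin (\<theta> x)^2"
      have ED: "E x - D x = cos (\<alpha> x - \<theta> x) * M - (real p + real q + 3) * sin (\<theta> x) * cos (\<theta> x) * sin (\<alpha> x - \<theta> x)"
        unfolding E_def D_def M_def using alg_id[of "real q" "\<alpha> x" "\<theta> x" "real p"] by simp
      have Mb: "\<bar>M\<bar> \<le> K"
      proof -
        have a1: "cos (\<theta> x)^2 \<le> 1" by (simp add: cos_squared_eq)
        have a2: "sin (\<theta> x)^2 \<le> 1" by (simp add: sin_squared_eq)
        note a = a1 a2
        have "real q * cos (\<theta> x)^2 \<le> real q" using a by (simp add: mult_left_le)
        moreover have "real p * sin (\<theta> x)^2 \<le> real p" using a by (simp add: mult_left_le)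
        moreover have "real q * cos (\<theta> x)^2 \<ge> 0" "real p * sin (\<theta> x)^2 \<ge> 0" by simp_all
        ultimately show ?thesis unfolding M_def K_def by linarith
      qed
      have sM: "sin (\<alpha> x - \<theta> x) * M \<le> K"
      proof -
        have "\<bar>sin (\<alpha> x - \<theta> x) * M\<bar> \<le> 1 * K"
          unfolding abs_mult by (intro mult_mono Mb abs_sin_le_one) auto
        then show ?thesis by linarith
      qed
      have eq: "- sin (\<alpha> x - \<theta> x) * (E x - D x) * exp (K* x) + K * cos (\<alpha> x - \<theta> x) * exp(K* x)
        = exp (K* x) * (cos (\<alpha> x - \<theta> x) * (K - sin (\<alpha> x - \<theta> x) * M)
           + (real p + real q + 3) * (sin (\<theta> x) * cos (\<theta> x)) * sin (\<alpha> x - \<theta> x)^2)"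
        unfolding ED by (simp add: algebra_simps power2_eq_square)
      have "0 \<le> exp (K* x) * (cos (\<alpha> x - \<theta> x) * (K - sin (\<alpha> x - \<theta> x) * M)
           + (real p + real q + 3) * (sin (\<theta> x) * cos (\<theta> x)) * sin (\<alpha> x - \<theta> x)^2)"
      proof -
        have h1: "0 \<le> cos (\<alpha> x - \<theta> x) * (K - sin (\<alpha> x - \<theta> x) * M)"
          using cpos sM by simp
        have h2: "0 \<le> (real p + real q + 3) * (sin (\<theta> x) * cos (\<theta> x)) * sin (\<alpha> x - \<theta> x)^2"
          using sc by simp
        show ?thesis using h1 h2 by simp
      qed
      with dd eq show "\<exists>y. (V has_real_derivative y) (at x) \<and> y \<ge> 0" by metis
    next
      show "continuous_on {s..t2} V" using cV by (simp add: continuous_at_imp_continuous_on)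
    qed
    moreover have "V t2 \<le> 0" using t2S by (simp add: S_def)
    ultimately show False using v1 by linarith
  qed
  show ?thesis
  proof (intro allI impI)
    fix s assume s: "s \<le> s0"
    have cu: "\<And>x. isCont (\<lambda>x. \<alpha> x - \<theta> x) x" using cth cal by (intro continuous_intros)
    have "pi/2 \<le> \<alpha> s - \<theta> s"
    proof (rule ccontr)
      assume "\<not> ?thesis"
      then have lt: "\<alpha> s - \<theta> s < pi/2" by simp
      have "\<alpha> s - \<theta> s \<le> - (pi/2)"
      proof (rule ccontr)
        assume "\<not> ?thesis"
        then have "cos (\<alpha> s - \<theta> s) > 0" using lt by (intro cos_gt_zero_pi) auto
        with vneg[OF s] show False by simp
      qed
      then have a1: "\<alpha> s - \<theta> s \<le> 0" using pi_gt_zero by linarith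
      have a2: "0 \<le> \<alpha> s0 - \<theta> s0" using assms(7) pi_gt_zero by linarith
      obtain t where "s \<le> t" "t \<le> s0" "\<alpha> t - \<theta> t = 0"
        using IVT[of "\<lambda>x. \<alpha> x - \<theta> x" s 0 s0, OF a1 a2 s] cu by blast
      with vneg[of t] show False by simp
    qed
    moreover have "\<alpha> s - \<theta> s \<le> 3* pi/2"
    proof (rule ccontr)
      assume "\<not> ?thesis"
      then have gt: "\<alpha> s - \<theta> s > 3* pi/2" by simp
      have "\<alpha> s - \<theta> s \<ge> 5* pi/2"
      proof (rule ccontr)
        assume "\<not> ?thesis"
        then have "cos (\<alpha> s - \<theta> s - 2* pi) > 0" using gt by (intro cos_gt_zero_pi) auto
        then have "cos (\<alpha> s - \<theta> s) > 0" by (simp add: cos_diff)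
        with vneg[OF s] show False by simp
      qed
      then have a1: "2 * pi \<le> \<alpha> s - \<theta> s" using pi_gt_zero by linarith
      have a2: "\<alpha> s0 - \<theta> s0 \<le> 2 * pi" using assms(8) pi_gt_zero by linarith
      obtain t where "s \<le> t" "t \<le> s0" "\<alpha> t - \<theta> t = 2 * pi"
        using IVT2[of "\<lambda>x. \<alpha> x - \<theta> x" s0 "2 * pi" s, OF a2 a1 s] cu by blast
      with vneg[of t] show False by simp
    qed
    ultimately show "(\<theta> s, \<alpha> s) \<in> R2" using thr[OF s] by (simp add: R2_def)
  qed
qed

end
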